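(* Let $\mathcal{F}\subset L_2(\mu)$ be a class of real-valued functions on $\mathcal{X}$, and let $\overline{\mathcal{F}}=\{\mathcal{O}f:f\in\mathcal{F}\}$ and $\mathcal{F}_\perp=\{f-\mathcal{O}f:f\in\mathcal{F}\}$. Assume the (empirical) Rademacher complexities below are well defined on $\mathcal{F}$, $\overline{\mathcal{F}}$ and $\mathcal{F}_\perp$. Then, with the data distributed as $T\sim\otimes^n\mu$, \[0\le \mathfrak{R}_n(\mathcal{F})-\mathfrak{R}_n(\overline{\mathcal{F}})\le \mathfrak{R}_n(\mathcal{F}_\perp)\] whenever the terms are finite.
   Context: $\mathcal{G}$ is a compact, second countable, Hausdorff topological group with Haar probability measure $\lambda$, acting measurably on a nonempty Polish space $\mathcal{X}$. $\mu$ is a $\mathcal{G}$-invariant Borel probability measure on $\mathcal{X}$ and $L_2(\mu)$ is the usual space of (classes of) square-integrable real functions. $\mathcal{O}f(x)=\int_\mathcal{G}f(gx)\,d\lambda(g)$. For $T=(x_1,\dots,x_n)\in\mathcal{X}^n$ and a class $\mathcal{H}$ of real functions, the empirical Rademacher complexity is $\mathrm{Rad}_T(\mathcal{H})=\mathbb{E}\big[\sup_{h\in\mathcal{H}}\big|\frac1n\sum_{i=1}^n\varsigma_ih(x_i)\big|\big]$ with $\varsigma_1,\dots,\varsigma_n$ i.i.d. uniform on $\{-1,1\}$; for random $T$ the Rademacher complexity is $\mathfrak{R}_n(\mathcal{H})=\mathbb{E}[\mathrm{Rad}_T(\mathcal{H})]$. *)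

theory Defs
  imports "HOL-Probability.Probability"
begin

text \<open>Haar probability measure on a compact group (written additively, not necessarily
  commutative): a Borel probability measure invariant under left translations.\<close>
definition haar_prob :: "('g::{topological_group_add}) measure \<Rightarrow> bool" where
  "haar_prob lam \<longleftrightarrow> sets lam = sets borel \<and> prob_space lam \<and>
     (\<forall>g. distr lam borel (\<lambda>h. g + h) = lam)"

definition measurable_action :: "('g::{topological_group_add} \<Rightarrow> 'x::topological_space \<Rightarrow> 'x) \<Rightarrow> bool" where
  "measurable_action act \<longleftrightarrow> (\<forall>x. act 0 x = x) \<and> (\<forall>g h x. act (g + h) x = act g (act h x))
     \<and> (\<lambda>(g, x). act g x) \<in> borel \<Otimes>\<^sub>M borel \<rightarrow>\<^sub>M borel"

definition orbit_avg :: "'g measure \<Rightarrow> ('g \<Rightarrow> 'x \<Rightarrow> 'x) \<Rightarrow> ('x \<Rightarrow> real) \<Rightarrow> 'x \<Rightarrow> real" where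
  "orbit_avg lam act f x = (\<integral>g. f (act g x) \<partial>lam)"

definition sign_vectors :: "nat \<Rightarrow> (nat \<Rightarrow> real) set" where
  "sign_vectors n = {..<n} \<rightarrow>\<^sub>E {-1, 1}"

text \<open>Empirical Rademacher complexity Rad_T(H), with T = (T 0, ..., T (n-1)); the expectation
  over uniform i.i.d. signs is the average over the 2^n sign vectors. Values in ennreal
  (the supremum may be infinite).\<close>
definition emp_rad :: "nat \<Rightarrow> (nat \<Rightarrow> 'x) \<Rightarrow> ('x \<Rightarrow> real) set \<Rightarrow> ennreal" where
  "emp_rad n T H = (\<Sum>s\<in>sign_vectors n.
       (SUP h\<in>H. ennreal \<bar>(1 / real n) * (\<Sum>i<n. s i * h (T i))\<bar>)) / 2 ^ n"

definition rad_complexity :: "'x measure \<Rightarrow> nat \<Rightarrow> ('x \<Rightarrow> real) set \<Rightarrow> ennreal" where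
  "rad_complexity mu n H = (\<integral>\<^sup>+ T. emp_rad n T H \<partial>(PiM {..<n} (\<lambda>_. mu)))"

end

theory Submission
  imports Defs
begin


lemma nn_integral_superadd:
  "integral\<^sup>N M u + integral\<^sup>N M v \<le> integral\<^sup>N M (\<lambda>x. u x + v x)"
proof -
  let ?A = "{g. simple_function M g \<and> g \<le> u}"
  let ?B = "{g. simple_function M g \<and> g \<le> v}"
  have "(\<lambda>_. 0) \<in> ?A" by (auto simp: le_fun_def)
  then have neA: "?A \<noteq> {}" by blast
  have "(\<lambda>_. 0) \<in> ?B" by (auto simp: le_fun_def)
  then have neB: "?B \<noteq> {}" by blast
  have "integral\<^sup>N M u + integral\<^sup>N M v = (SUP g\<in>?A. integral\<^sup>S M g) + (SUP h\<in>?B. integral\<^sup>S M h)"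
    unfolding nn_integral_def ..
  also have "\<dots> = (SUP h\<in>?B. SUP g\<in>?A. integral\<^sup>S M g + integral\<^sup>S M h)"
    by (simp add: ennreal_SUP_add_left[OF neA, symmetric] ennreal_SUP_add_right[OF neB])
  also have "\<dots> \<le> integral\<^sup>N M (\<lambda>x. u x + v x)"
  proof (intro SUP_least)
    fix h g assume h: "h \<in> ?B" and g: "g \<in> ?A"
    have "integral\<^sup>S M g + integral\<^sup>S M h = integral\<^sup>S M (\<lambda>x. g x + h x)"
      using g h by simp
    also have "\<dots> \<le> integral\<^sup>N M (\<lambda>x. u x + v x)"
      unfolding nn_integral_def
      by (rule SUP_upper) (use g h in \<open>auto simp: le_fun_def intro: add_mono\<close>)
    finally show "integral\<^sup>S M g + integral\<^sup>S M h \<le> integral\<^sup>N M (\<lambda>x. u x + v x)" .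
  qed
  finally show ?thesis .
qed

lemma nn_integral_superadd_sum:
  assumes "finite S"
  shows "(\<Sum>s\<in>S. integral\<^sup>N M (B s)) \<le> (\<integral>\<^sup>+x. (\<Sum>s\<in>S. B s x) \<partial>M)"
  using assms
proof (induction S rule: finite_induct)
  case empty then show ?case by simp
next
  case (insert a S)
  have "(\<Sum>s\<in>insert a S. integral\<^sup>N M (B s)) = integral\<^sup>N M (B a) + (\<Sum>s\<in>S. integral\<^sup>N M (B s))"
    using insert by simp
  also have "\<dots> \<le> integral\<^sup>N M (B a) + (\<integral>\<^sup>+x. (\<Sum>s\<in>S. B s x) \<partial>M)"
    using insert by (intro add_left_mono) auto
  also have "\<dots> \<le> (\<integral>\<^sup>+x. B a x + (\<Sum>s\<in>S. B s x) \<partial>M)"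
    by (rule nn_integral_superadd)
  also have "\<dots> = (\<integral>\<^sup>+x. (\<Sum>s\<in>insert a S. B s x) \<partial>M)"
    using insert by simp
  finally show ?case .
qed


lemma ediv_times: "(x::ennreal) / 2^n * 2^n = x"
proof -
  have "x / 2^n * 2^n = x * 2^n / 2^n" by (simp add: divide_ennreal_def ac_simps)
  also have "\<dots> = x" by (rule ennreal_mult_divide_eq) (auto simp: power_eq_top_ennreal)
  finally show ?thesis .
qed

lemma finite_sv: "finite (sign_vectors n)"
  unfolding sign_vectors_def by (auto intro!: finite_PiE)

lemma single_bound:
  fixes a :: "nat \<Rightarrow> real"
  assumes j: "j < n"
  shows "ennreal \<bar>a j\<bar> \<le> of_nat n * (\<Sum>s\<in>sign_vectors n. ennreal \<bar>(1 / real n) * (\<Sum>i<n. s i * a i)\<bar>)"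
proof -
  define s0 where "s0 = (\<lambda>i\<in>{..<n}. (1::real))"
  define s1 where "s1 = s0(j := -1)"
  have s0: "s0 \<in> sign_vectors n" unfolding s0_def sign_vectors_def by (simp add: PiE_iff)
  have s1: "s1 \<in> sign_vectors n" unfolding s1_def s0_def sign_vectors_def using j
    by (simp add: PiE_iff extensional_def)
  have "s0 j \<noteq> s1 j" by (simp add: s0_def s1_def j)
  then have ne: "s0 \<noteq> s1" by metis
  define u where "u s = (1 / real n) * (\<Sum>i<n. s i * a i)" for s
  have "(\<Sum>i<n. s0 i * a i) - (\<Sum>i<n. s1 i * a i) = (\<Sum>i<n. (s0 i - s1 i) * a i)"
    by (simp add: sum_subtractf left_diff_distrib)
  also have "\<dots> = (\<Sum>i<n. (if i = j then 2 * a j else 0))"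
    by (rule sum.cong) (simp_all add: s1_def s0_def)
  also have "\<dots> = 2 * a j" using j by simp
  finally have d: "u s0 - u s1 = 2 * a j / real n" unfolding u_def by (simp add: diff_divide_distrib[symmetric])
  have npos: "real n > 0" using j by simp
  have e: "real n / 2 * (u s0 - u s1) = a j" using d npos by (simp add: field_simps)
  have "\<bar>a j\<bar> = real n / 2 * \<bar>u s0 - u s1\<bar>" unfolding e[symmetric] using npos by (simp add: abs_mult)
  also have "\<dots> \<le> real n / 2 * (\<bar>u s0\<bar> + \<bar>u s1\<bar>)"
    by (rule mult_left_mono[OF abs_triangle_ineq4]) (use npos in auto)
  also have "\<dots> \<le> real n * (\<bar>u s0\<bar> + \<bar>u s1\<bar>)"
    by (rule mult_right_mono) auto
  finally have "ennreal \<bar>a j\<bar> \<le> ennreal (real n * (\<bar>u s0\<bar> + \<bar>u s1\<bar>))" by (rule ennreal_leI)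
  also have "\<dots> = of_nat n * (ennreal \<bar>u s0\<bar> + ennreal \<bar>u s1\<bar>)"
    by (simp add: ennreal_mult ennreal_plus ennreal_of_nat_eq_real_of_nat)
  also have "ennreal \<bar>u s0\<bar> + ennreal \<bar>u s1\<bar> = (\<Sum>s\<in>{s0, s1}. ennreal \<bar>u s\<bar>)"
    using ne by simp
  also have "of_nat n * \<dots> \<le> of_nat n * (\<Sum>s\<in>sign_vectors n. ennreal \<bar>u s\<bar>)"
    using s0 s1 by (intro mult_left_mono sum_mono2 finite_sv) auto
  finally show ?thesis unfolding u_def .
qed

theorem proposition3p11:
  fixes lam :: "('g::{topological_group_add, t2_space, second_countable_topology}) measure"
    and act :: "'g \<Rightarrow> 'x::polish_space \<Rightarrow> 'x"
    and mu :: "'x measure"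
    and F :: "('x \<Rightarrow> real) set"
    and n :: nat
  assumes compact_G: "compact (UNIV :: 'g set)"
    and haar: "haar_prob lam"
    and act: "measurable_action act"
    and mu_borel: "sets mu = sets borel"
    and mu_prob: "prob_space mu"
    and mu_inv: "\<forall>g. distr mu borel (act g) = mu"
    and F_L2: "\<forall>f\<in>F. f \<in> borel_measurable mu \<and> integrable mu (\<lambda>x. (f x)\<^sup>2)"
    and meas_F: "(\<lambda>T. emp_rad n T F) \<in> borel_measurable (PiM {..<n} (\<lambda>_. mu))"
    and meas_Fbar: "(\<lambda>T. emp_rad n T ((\<lambda>f. orbit_avg lam act f) ` F))
                      \<in> borel_measurable (PiM {..<n} (\<lambda>_. mu))"
    and meas_Fperp: "(\<lambda>T. emp_rad n T ((\<lambda>f x. f x - orbit_avg lam act f x) ` F))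
                      \<in> borel_measurable (PiM {..<n} (\<lambda>_. mu))"
    and fin_F: "rad_complexity mu n F < \<infinity>"
    and fin_Fbar: "rad_complexity mu n ((\<lambda>f. orbit_avg lam act f) ` F) < \<infinity>"
    and fin_Fperp: "rad_complexity mu n ((\<lambda>f x. f x - orbit_avg lam act f x) ` F) < \<infinity>"
  shows "0 \<le> enn2real (rad_complexity mu n F)
              - enn2real (rad_complexity mu n ((\<lambda>f. orbit_avg lam act f) ` F))
       \<and> enn2real (rad_complexity mu n F)
              - enn2real (rad_complexity mu n ((\<lambda>f. orbit_avg lam act f) ` F))
         \<le> enn2real (rad_complexity mu n ((\<lambda>f x. f x - orbit_avg lam act f x) ` F))"
  proof -
  interpret mu: prob_space mu by (rule mu_prob)
  have lam_prob: "prob_space lam" and lam_sets: "sets lam = sets borel"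
    using haar by (auto simp: haar_prob_def)
  interpret lam: prob_space lam by (rule lam_prob)
  define P where "P = PiM {..<n} (\<lambda>_. mu)"
  interpret P: prob_space P unfolding P_def by (intro prob_space_PiM mu_prob)
  interpret LP: pair_sigma_finite lam P
    by (intro pair_sigma_finite.intro lam.sigma_finite_measure_axioms P.sigma_finite_measure_axioms)
  define Fb where "Fb = (\<lambda>f. orbit_avg lam act f) ` F"
  define Fp where "Fp = (\<lambda>f x. f x - orbit_avg lam act f x) ` F"
  define Phi where "Phi = (\<lambda>T. emp_rad n T F)"
  define A where "A = (\<lambda>g T. compose {..<n} (act g) T)"
  define SV where "SV = sign_vectors n"
  have finSV: "finite SV" unfolding SV_def by (rule finite_sv)
  have space_lam: "space lam = UNIV" using sets_eq_imp_space_eq[OF lam_sets] by simp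
  have space_mu: "space mu = UNIV" using sets_eq_imp_space_eq[OF mu_borel] by simp
  have act_meas: "(\<lambda>(g, x). act g x) \<in> lam \<Otimes>\<^sub>M mu \<rightarrow>\<^sub>M mu"
    using act unfolding measurable_action_def
    by (subst measurable_cong_sets[OF sets_pair_measure_cong[OF lam_sets mu_borel] mu_borel]) auto
  have actg: "act g \<in> mu \<rightarrow>\<^sub>M mu" for g
    using measurable_Pair2[OF act_meas, of g] by (simp add: space_lam)
  have actx: "(\<lambda>g. act g x) \<in> lam \<rightarrow>\<^sub>M mu" for x
    using measurable_Pair1[OF act_meas, of x] by (simp add: space_mu)
  have fmeas: "f \<in> borel_measurable mu" if "f \<in> F" for f
    using F_L2 that by auto
  have A_meas: "(\<lambda>p. A (fst p) (snd p)) \<in> lam \<Otimes>\<^sub>M P \<rightarrow>\<^sub>M P"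
    unfolding A_def compose_def P_def
  proof (rule measurable_restrict)
    fix i assume i: "i \<in> {..<n}"
    have "(\<lambda>p. (fst p, snd p i)) \<in> lam \<Otimes>\<^sub>M PiM {..<n} (\<lambda>_. mu) \<rightarrow>\<^sub>M lam \<Otimes>\<^sub>M mu"
      using i by (intro measurable_Pair measurable_fst measurable_compose[OF measurable_snd]
                    measurable_component_singleton) auto
    from measurable_compose[OF this act_meas]
    show "(\<lambda>p. act (fst p) (snd p i)) \<in> lam \<Otimes>\<^sub>M PiM {..<n} (\<lambda>_. mu) \<rightarrow>\<^sub>M mu" by simp
  qed
  have Phi_meas: "Phi \<in> borel_measurable P" using meas_F unfolding Phi_def P_def .
  have PhiA_meas: "(\<lambda>p. Phi (A (fst p) (snd p))) \<in> borel_measurable (lam \<Otimes>\<^sub>M P)"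
    by (rule measurable_compose[OF A_meas Phi_meas])
  have Ag_meas: "A g \<in> P \<rightarrow>\<^sub>M P" for g
    using measurable_Pair2[OF A_meas, of g] by (simp add: space_lam)
  have distrA: "distr P P (A g) = P" for g
  proof -
    have "distr P P (A g) = PiM {..<n} (\<lambda>i. distr mu mu (act g))"
      unfolding P_def A_def
      by (rule distr_PiM_finite_prob_space') (auto intro: mu_prob actg)
    also have "\<dots> = P"
      unfolding P_def
    proof (rule PiM_cong)
      fix i
      have "distr mu mu (act g) = distr mu borel (act g)" by (rule distr_cong) (auto simp: mu_borel)
      then show "distr mu mu (act g) = mu" using mu_inv by simp
    qed simp
    finally show ?thesis .
  qed
  have inner: "(\<integral>\<^sup>+T. Phi (A g T) \<partial>P) = (\<integral>\<^sup>+T. Phi T \<partial>P)" for g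
  proof -
    have "(\<integral>\<^sup>+T. Phi T \<partial>P) = (\<integral>\<^sup>+T. Phi T \<partial>distr P P (A g))" by (simp add: distrA)
    also have "\<dots> = (\<integral>\<^sup>+T. Phi (A g T) \<partial>P)"
      by (rule nn_integral_distr[OF Ag_meas]) (simp add: distrA Phi_meas)
    finally show ?thesis by simp
  qed
  have key: "emp_rad n T Fb \<le> (\<integral>\<^sup>+g. Phi (A g T) \<partial>lam)" if T: "T \<in> space P" for T
  proof -
    define Bs where "Bs s g = (SUP f\<in>F. ennreal \<bar>(1 / real n) * (\<Sum>i<n. s i * f (act g (T i)))\<bar>)" for s g
    define Ssum where "Ssum g = (\<Sum>s\<in>SV. Bs s g)" for g
    have W: "Phi (A g T) = Ssum g / 2^n" for g
      unfolding Phi_def emp_rad_def Ssum_def Bs_def SV_def A_def compose_def by simp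
    have W_meas: "(\<lambda>g. Phi (A g T)) \<in> borel_measurable lam"
      using measurable_Pair1[OF PhiA_meas, of T] T by simp
    have Ssum_eq: "Ssum g = Phi (A g T) * 2^n" for g using W ediv_times by simp
    have Ssum_meas: "Ssum \<in> borel_measurable lam"
      unfolding Ssum_eq by (intro borel_measurable_times_ennreal W_meas) auto
    show ?thesis
    proof (cases "(\<integral>\<^sup>+g. Phi (A g T) \<partial>lam) = \<infinity>")
      case True then show ?thesis by simp
    next
      case False
      have intSsum: "(\<integral>\<^sup>+g. Ssum g \<partial>lam) < \<infinity>"
        using False by (simp add: Ssum_eq nn_integral_multc W_meas ennreal_mult_less_top less_top power_less_top_ennreal)
      have integ: "integrable lam (\<lambda>g. f (act g (T j)))" if f: "f \<in> F" and j: "j < n" for f j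
      proof (rule integrableI_bounded)
        show "(\<lambda>g. f (act g (T j))) \<in> borel_measurable lam"
          using measurable_compose[OF actx fmeas[OF f]] .
        have "(\<integral>\<^sup>+g. ennreal (norm (f (act g (T j)))) \<partial>lam) \<le> (\<integral>\<^sup>+g. of_nat n * Ssum g \<partial>lam)"
        proof (rule nn_integral_mono)
          fix g
          have "ennreal \<bar>f (act g (T j))\<bar> \<le> of_nat n * (\<Sum>s\<in>SV. ennreal \<bar>(1 / real n) * (\<Sum>i<n. s i * f (act g (T i)))\<bar>)"
            using single_bound[OF j, of "\<lambda>i. f (act g (T i))"] unfolding SV_def by simp
          also have "\<dots> \<le> of_nat n * Ssum g"
            unfolding Ssum_def Bs_def
            by (intro mult_left_mono sum_mono SUP_upper f) auto
          finally show "ennreal (norm (f (act g (T j)))) \<le> of_nat n * Ssum g" by simp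
        qed
        also have "\<dots> = of_nat n * (\<integral>\<^sup>+g. Ssum g \<partial>lam)" by (rule nn_integral_cmult[OF Ssum_meas])
        also have "\<dots> < \<infinity>" using intSsum by (simp add: ennreal_mult_less_top of_nat_less_top)
        finally show "(\<integral>\<^sup>+g. ennreal (norm (f (act g (T j)))) \<partial>lam) < \<infinity>" .
      qed
      have per_s: "(SUP h\<in>Fb. ennreal \<bar>(1 / real n) * (\<Sum>i<n. s i * h (T i))\<bar>) \<le> (\<integral>\<^sup>+g. Bs s g \<partial>lam)"
        if s: "s \<in> SV" for s
        unfolding Fb_def
      proof (rule SUP_least)
        fix h assume "h \<in> (\<lambda>f. orbit_avg lam act f) ` F"
        then obtain f where f: "f \<in> F" and h: "h = orbit_avg lam act f" by auto
        have integ1: "integrable lam (\<lambda>g. s i * f (act g (T i)))" if "i \<in> {..<n}" for i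
          using integ[OF f] that by auto
        have integ0: "integrable lam (\<lambda>g. \<Sum>i<n. s i * f (act g (T i)))"
          by (rule Bochner_Integration.integrable_sum[where I="{..<n}" and f="\<lambda>i g. s i * f (act g (T i))"]) (rule integ1)
        have integ2: "integrable lam (\<lambda>g. (1 / real n) * (\<Sum>i<n. s i * f (act g (T i))))"
          by (rule Bochner_Integration.integrable_mult_right) (rule integ0)
        have S: "(\<integral>g. (\<Sum>i<n. s i * f (act g (T i))) \<partial>lam) = (\<Sum>i<n. (\<integral>g. s i * f (act g (T i)) \<partial>lam))"
          by (rule Bochner_Integration.integral_sum[where I="{..<n}" and f="\<lambda>i g. s i * f (act g (T i))"])
             (rule integ1)
        have "(\<integral>g. (1 / real n) * (\<Sum>i<n. s i * f (act g (T i))) \<partial>lam)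
              = (1 / real n) * (\<Sum>i<n. s i * h (T i))"
          by (simp only: integral_mult_right_zero S h orbit_avg_def)
        then have eq: "(1 / real n) * (\<Sum>i<n. s i * h (T i))
             = (\<integral>g. (1 / real n) * (\<Sum>i<n. s i * f (act g (T i))) \<partial>lam)" by (rule sym)
        have "ennreal \<bar>(1 / real n) * (\<Sum>i<n. s i * h (T i))\<bar>
              = ennreal (norm (\<integral>g. (1 / real n) * (\<Sum>i<n. s i * f (act g (T i))) \<partial>lam))"
          by (simp only: eq real_norm_def)
        also have "\<dots> \<le> (\<integral>\<^sup>+g. ennreal (norm ((1 / real n) * (\<Sum>i<n. s i * f (act g (T i))))) \<partial>lam)"
          by (rule integral_norm_bound_ennreal[OF integ2])
        also have "\<dots> \<le> (\<integral>\<^sup>+g. Bs s g \<partial>lam)"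
          unfolding Bs_def real_norm_def
          by (intro nn_integral_mono SUP_upper f)
        finally show "ennreal \<bar>(1 / real n) * (\<Sum>i<n. s i * h (T i))\<bar> \<le> (\<integral>\<^sup>+g. Bs s g \<partial>lam)" .
      qed
      have "emp_rad n T Fb = (\<Sum>s\<in>SV. SUP h\<in>Fb. ennreal \<bar>(1 / real n) * (\<Sum>i<n. s i * h (T i))\<bar>) / 2^n"
        unfolding emp_rad_def SV_def ..
      also have "\<dots> \<le> (\<Sum>s\<in>SV. (\<integral>\<^sup>+g. Bs s g \<partial>lam)) / 2^n"
        by (intro divide_right_mono_ennreal sum_mono per_s)
      also have "\<dots> \<le> (\<integral>\<^sup>+g. Ssum g \<partial>lam) / 2^n"
        unfolding Ssum_def by (intro divide_right_mono_ennreal nn_integral_superadd_sum finSV)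
      also have "\<dots> = (\<integral>\<^sup>+g. Ssum g / 2^n \<partial>lam)"
        by (rule nn_integral_divide[OF Ssum_meas, symmetric])
      also have "\<dots> = (\<integral>\<^sup>+g. Phi (A g T) \<partial>lam)" by (simp add: W)
      finally show ?thesis .
    qed
  qed
  have lower: "rad_complexity mu n Fb \<le> rad_complexity mu n F"
  proof -
    have "rad_complexity mu n Fb = (\<integral>\<^sup>+T. emp_rad n T Fb \<partial>P)" unfolding rad_complexity_def P_def ..
    also have "\<dots> \<le> (\<integral>\<^sup>+T. (\<integral>\<^sup>+g. Phi (A g T) \<partial>lam) \<partial>P)" by (intro nn_integral_mono key)
    also have "\<dots> = (\<integral>\<^sup>+g. (\<integral>\<^sup>+T. Phi (A g T) \<partial>P) \<partial>lam)" using LP.Fubini[OF PhiA_meas] by simp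
    also have "\<dots> = (\<integral>\<^sup>+g. (\<integral>\<^sup>+T. Phi T \<partial>P) \<partial>lam)" by (simp add: inner)
    also have "\<dots> = (\<integral>\<^sup>+T. Phi T \<partial>P)" by (simp add: lam.emeasure_space_1)
    also have "\<dots> = rad_complexity mu n F" unfolding rad_complexity_def P_def Phi_def ..
    finally show ?thesis .
  qed
  have pw: "emp_rad n T F \<le> emp_rad n T Fb + emp_rad n T Fp" for T
  proof -
    have ps: "(SUP f\<in>F. ennreal \<bar>(1 / real n) * (\<Sum>i<n. s i * f (T i))\<bar>)
       \<le> (SUP h\<in>Fb. ennreal \<bar>(1 / real n) * (\<Sum>i<n. s i * h (T i))\<bar>)
         + (SUP h\<in>Fp. ennreal \<bar>(1 / real n) * (\<Sum>i<n. s i * h (T i))\<bar>)" for s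
    proof (rule SUP_least)
      fix f assume f: "f \<in> F"
      let ?a = "(1 / real n) * (\<Sum>i<n. s i * orbit_avg lam act f (T i))"
      let ?b = "(1 / real n) * (\<Sum>i<n. s i * (f (T i) - orbit_avg lam act f (T i)))"
      have split: "(1 / real n) * (\<Sum>i<n. s i * f (T i)) = ?a + ?b"
        by (simp add: right_diff_distrib sum_subtractf diff_divide_distrib)
      have "ennreal \<bar>(1 / real n) * (\<Sum>i<n. s i * f (T i))\<bar> \<le> ennreal (\<bar>?a\<bar> + \<bar>?b\<bar>)"
        by (rule ennreal_leI) (subst split, rule abs_triangle_ineq)
      also have "\<dots> = ennreal \<bar>?a\<bar> + ennreal \<bar>?b\<bar>" by (simp add: ennreal_plus)
      also have "\<dots> \<le> (SUP h\<in>Fb. ennreal \<bar>(1 / real n) * (\<Sum>i<n. s i * h (T i))\<bar>)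
         + (SUP h\<in>Fp. ennreal \<bar>(1 / real n) * (\<Sum>i<n. s i * h (T i))\<bar>)"
      proof (rule add_mono)
        show "ennreal \<bar>?a\<bar> \<le> (SUP h\<in>Fb. ennreal \<bar>(1 / real n) * (\<Sum>i<n. s i * h (T i))\<bar>)"
          by (rule SUP_upper2[where i="orbit_avg lam act f"]) (auto simp: Fb_def f)
        show "ennreal \<bar>?b\<bar> \<le> (SUP h\<in>Fp. ennreal \<bar>(1 / real n) * (\<Sum>i<n. s i * h (T i))\<bar>)"
          by (rule SUP_upper2[where i="\<lambda>x. f x - orbit_avg lam act f x"]) (auto simp: Fp_def f)
      qed
      finally show "ennreal \<bar>(1 / real n) * (\<Sum>i<n. s i * f (T i))\<bar> \<le> (SUP h\<in>Fb. ennreal \<bar>(1 / real n) * (\<Sum>i<n. s i * h (T i))\<bar>)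
         + (SUP h\<in>Fp. ennreal \<bar>(1 / real n) * (\<Sum>i<n. s i * h (T i))\<bar>)" .
    qed
    have "emp_rad n T F \<le> (\<Sum>s\<in>sign_vectors n. (SUP h\<in>Fb. ennreal \<bar>(1 / real n) * (\<Sum>i<n. s i * h (T i))\<bar>)
         + (SUP h\<in>Fp. ennreal \<bar>(1 / real n) * (\<Sum>i<n. s i * h (T i))\<bar>)) / 2^n"
      unfolding emp_rad_def by (intro divide_right_mono_ennreal sum_mono ps)
    also have "\<dots> = emp_rad n T Fb + emp_rad n T Fp"
      unfolding emp_rad_def by (simp add: sum.distrib divide_ennreal_def distrib_right)
    finally show ?thesis .
  qed
  have upper: "rad_complexity mu n F \<le> rad_complexity mu n Fb + rad_complexity mu n Fp"
  proof -
    have "rad_complexity mu n F \<le> (\<integral>\<^sup>+T. emp_rad n T Fb + emp_rad n T Fp \<partial>P)"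
      unfolding rad_complexity_def P_def by (intro nn_integral_mono pw)
    also have "\<dots> = rad_complexity mu n Fb + rad_complexity mu n Fp"
      unfolding rad_complexity_def P_def
      by (rule nn_integral_add) (use meas_Fbar meas_Fperp in \<open>simp_all add: Fb_def Fp_def\<close>)
    finally show ?thesis .
  qed
  have fb: "rad_complexity mu n Fb < \<infinity>" and fp: "rad_complexity mu n Fp < \<infinity>"
    using fin_Fbar fin_Fperp unfolding Fb_def Fp_def by auto
  have l: "enn2real (rad_complexity mu n Fb) \<le> enn2real (rad_complexity mu n F)"
    by (rule enn2real_mono[OF lower]) (use fin_F in simp)
  have "enn2real (rad_complexity mu n F) \<le> enn2real (rad_complexity mu n Fb + rad_complexity mu n Fp)"
    by (rule enn2real_mono[OF upper]) (use fb fp in \<open>simp add: ennreal_add_less_top\<close>)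
  also have "\<dots> = enn2real (rad_complexity mu n Fb) + enn2real (rad_complexity mu n Fp)"
    by (rule enn2real_plus) (use fb fp in auto)
  finally have u: "enn2real (rad_complexity mu n F) \<le> enn2real (rad_complexity mu n Fb) + enn2real (rad_complexity mu n Fp)" .
  show ?thesis using l u unfolding Fb_def Fp_def by linarith
qed

end
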